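(* Let $f\in P_k^n$, let $N\in Sep(f)$, and let $x_1,\dots,x_m$ be essential variables of $f$. Suppose there exist constants $c_1,\dots,c_m\in Z_k$ such that $N\cap Ess(f(x_i=c_i))=\emptyset$ for every $i=1,\dots,m$. Then $M\cup N\in Sep(f)$ for every nonempty $M\subseteq\{x_1,\dots,x_m\}$.
   Context: $Z_k=\{0,1,\dots,k-1\}$, $k\ge2$; $P_k^n$ is the set of all maps $f:Z_k^n\to Z_k$ in the variables $x_1,\dots,x_n$. A variable $x_i$ is essential in $f$ if there are $a_1,\dots,a_n,b\in Z_k$ with $f(a_1,\dots,a_i,\dots,a_n)\ne f(a_1,\dots,a_{i-1},b,a_{i+1},\dots,a_n)$; $Ess(f)$ is the set of essential variables. For an essential $x_i$ and $c\in Z_k$, $f(x_i=c)$ is the function obtained by assigning $c$ to $x_i$; $f\succ g$ means $g=f(x_i=c)$ for some essential $x_i$ and $c$, and $\succeq$ is the reflexive-transitive closure of $\succ$ (the elements $g$ with $f\succeq g$ are the subfunctions of $f$). A nonempty set $M\subseteq Ess(f)$ is separable in $f$ if $M=Ess(g)$ for some $g$ with $f\succeq g$; $Sep(f)$ is the set of separable sets of $f$. *)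

theory Defs
  imports Main
begin

(* Inputs: assignments a :: nat => nat to the variables x_1..x_n (indices 1..n),
   with values in Z_k = {0..<k}; other indices are fixed to 0. *)
definition inputs :: "nat \<Rightarrow> nat \<Rightarrow> (nat \<Rightarrow> nat) set" where
  "inputs k n = {a. (\<forall>i\<in>{1..n}. a i < k) \<and> (\<forall>i. i \<notin> {1..n} \<longrightarrow> a i = 0)}"

definition Pkn :: "nat \<Rightarrow> nat \<Rightarrow> ((nat \<Rightarrow> nat) \<Rightarrow> nat) set" where
  "Pkn k n = {f. \<forall>a\<in>inputs k n. f a < k}"

definition Ess :: "nat \<Rightarrow> nat \<Rightarrow> ((nat \<Rightarrow> nat) \<Rightarrow> nat) \<Rightarrow> nat set" where
  "Ess k n f = {i\<in>{1..n}. \<exists>a\<in>inputs k n. \<exists>b<k. f a \<noteq> f (a(i := b))}"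

definition assign :: "((nat \<Rightarrow> nat) \<Rightarrow> nat) \<Rightarrow> nat \<Rightarrow> nat \<Rightarrow> ((nat \<Rightarrow> nat) \<Rightarrow> nat)" where
  "assign f i c = (\<lambda>a. f (a(i := c)))"

definition succ_fun :: "nat \<Rightarrow> nat \<Rightarrow> ((nat \<Rightarrow> nat) \<Rightarrow> nat) \<Rightarrow> ((nat \<Rightarrow> nat) \<Rightarrow> nat) \<Rightarrow> bool" where
  "succ_fun k n f g \<longleftrightarrow> (\<exists>i\<in>Ess k n f. \<exists>c<k. g = assign f i c)"

definition subfun :: "nat \<Rightarrow> nat \<Rightarrow> ((nat \<Rightarrow> nat) \<Rightarrow> nat) \<Rightarrow> ((nat \<Rightarrow> nat) \<Rightarrow> nat) \<Rightarrow> bool" where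
  "subfun k n = (succ_fun k n)\<^sup>*\<^sup>*"

definition Sep :: "nat \<Rightarrow> nat \<Rightarrow> ((nat \<Rightarrow> nat) \<Rightarrow> nat) \<Rightarrow> nat set set" where
  "Sep k n f = {M. M \<noteq> {} \<and> M \<subseteq> Ess k n f \<and> (\<exists>g. subfun k n f g \<and> M = Ess k n g)}"

end

theory Submission
  imports Defs
begin

definition ov :: "nat set \<Rightarrow> (nat \<Rightarrow> nat) \<Rightarrow> (nat \<Rightarrow> nat) \<Rightarrow> (nat \<Rightarrow> nat)" where
  "ov T \<beta> a = (\<lambda>l. if l \<in> T then \<beta> l else a l)"

lemma inputs_upd: "a \<in> inputs k n \<Longrightarrow> i \<in> {1..n} \<Longrightarrow> b < k \<Longrightarrow> a(i:=b) \<in> inputs k n"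
  by (auto simp: inputs_def)

lemma ov_inputs: "a \<in> inputs k n \<Longrightarrow> T \<subseteq> {1..n} \<Longrightarrow> \<forall>l\<in>T. \<beta> l < k \<Longrightarrow> ov T \<beta> a \<in> inputs k n"
  by (auto simp: inputs_def ov_def)

lemma ess_cong: "\<forall>a\<in>inputs k n. g a = F a \<Longrightarrow> Ess k n g = Ess k n F"
  unfolding Ess_def by (metis (no_types, lifting) inputs_upd atLeastAtMost_iff mem_Collect_eq)

lemma ess_sub: "Ess k n f \<subseteq> {1..n}" by (auto simp: Ess_def)

lemma lemA: "subfun k n f g \<Longrightarrow> \<exists>T \<beta>. T \<subseteq> {1..n} \<and> (\<forall>l\<in>T. \<beta> l < k) \<and> g = (\<lambda>a. f (ov T \<beta> a))"
  unfolding subfun_def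
proof (induction rule: rtranclp_induct)
  case base
  show ?case by (rule exI[of _ "{}"], auto simp: ov_def)
next
  case (step g g2)
  from step.IH obtain T \<beta> where T: "T \<subseteq> {1..n}" "\<forall>l\<in>T. \<beta> l < k" and g: "g = (\<lambda>a. f (ov T \<beta> a))" by blast
  from step.hyps(2) obtain i c where i: "i \<in> Ess k n g" and c: "c < k" and g2: "g2 = assign g i c"
    unfolding succ_fun_def by blast
  have iT: "i \<notin> T"
  proof
    assume "i \<in> T"
    hence "\<And>a b. g a = g (a(i:=b))" unfolding g ov_def by (auto intro!: arg_cong[where f=f])
    with i show False unfolding Ess_def by auto
  qed
  have in1: "i \<in> {1..n}" using i ess_sub by blast
  have "g2 = (\<lambda>a. f (ov (insert i T) (\<beta>(i:=c)) a))"
    unfolding g2 assign_def g using iT by (auto simp: ov_def intro!: ext arg_cong[where f=f])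
  moreover have "insert i T \<subseteq> {1..n}" "\<forall>l\<in>insert i T. (\<beta>(i:=c)) l < k" using T in1 c by auto
  ultimately show ?case by blast
qed

lemma lemD: "T \<subseteq> {1..n} \<Longrightarrow> \<forall>l\<in>T. \<beta> l < k \<Longrightarrow> Ess k n (\<lambda>a. f (ov T \<beta> a)) \<subseteq> Ess k n f - T"
proof
  fix j assume T: "T \<subseteq> {1..n}" "\<forall>l\<in>T. \<beta> l < k" and j: "j \<in> Ess k n (\<lambda>a. f (ov T \<beta> a))"
  then obtain a b where a: "a \<in> inputs k n" "b < k" "f (ov T \<beta> a) \<noteq> f (ov T \<beta> (a(j:=b)))" and jn: "j \<in> {1..n}"
    unfolding Ess_def by blast
  have jT: "j \<notin> T"
  proof
    assume "j \<in> T" hence "ov T \<beta> a = ov T \<beta> (a(j:=b))" by (auto simp: ov_def)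
    with a show False by simp
  qed
  have "ov T \<beta> (a(j:=b)) = (ov T \<beta> a)(j:=b)" using jT by (auto simp: ov_def)
  with a jn ov_inputs[OF a(1) T] show "j \<in> Ess k n f - T" unfolding Ess_def using jT by auto
qed

lemma lemStep: "subfun k n f g \<Longrightarrow> \<forall>a\<in>inputs k n. g a = F a \<Longrightarrow> i \<in> {1..n} \<Longrightarrow> c < k \<Longrightarrow>
   \<exists>g'. subfun k n f g' \<and> (\<forall>a\<in>inputs k n. g' a = assign F i c a)"
proof (cases "i \<in> Ess k n g")
  case True
  assume h: "subfun k n f g" "\<forall>a\<in>inputs k n. g a = F a" "i \<in> {1..n}" "c < k"
  have "succ_fun k n g (assign g i c)" unfolding succ_fun_def using True h by blast
  hence "subfun k n f (assign g i c)" using h(1) unfolding subfun_def by simp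
  moreover have "\<forall>a\<in>inputs k n. assign g i c a = assign F i c a"
    using h by (auto simp: assign_def inputs_upd)
  ultimately show ?thesis by blast
next
  case False
  assume h: "subfun k n f g" "\<forall>a\<in>inputs k n. g a = F a" "i \<in> {1..n}" "c < k"
  have "\<forall>a\<in>inputs k n. g a = assign F i c a"
  proof
    fix a assume a: "a \<in> inputs k n"
    have "g a = g (a(i:=c))" using False h a unfolding Ess_def by auto
    thus "g a = assign F i c a" using h a by (auto simp: assign_def inputs_upd)
  qed
  thus ?thesis using h by blast
qed

lemma lemB: "T \<subseteq> {1..n} \<Longrightarrow> \<forall>l\<in>T. \<beta> l < k \<Longrightarrow>
   \<exists>g. subfun k n f g \<and> (\<forall>a\<in>inputs k n. g a = f (ov T \<beta> a))"
proof -
  assume T: "T \<subseteq> {1..n}" "\<forall>l\<in>T. \<beta> l < k"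
  have fin: "finite T" using T finite_subset by blast
  from fin T show ?thesis
  proof (induction T rule: finite_induct)
    case empty
    show ?case by (rule exI[of _ f]) (auto simp: subfun_def ov_def)
  next
    case (insert i T)
    then obtain g where g: "subfun k n f g" "\<forall>a\<in>inputs k n. g a = f (ov T \<beta> a)" by auto
    from lemStep[OF g, of i "\<beta> i"] insert.prems obtain g' where
      g': "subfun k n f g'" "\<forall>a\<in>inputs k n. g' a = assign (\<lambda>a. f (ov T \<beta> a)) i (\<beta> i) a" by auto
    have "\<And>a. assign (\<lambda>a. f (ov T \<beta> a)) i (\<beta> i) a = f (ov (insert i T) \<beta> a)"
      using insert.hyps by (auto simp: assign_def ov_def intro!: arg_cong[where f=f])
    thus ?case using g' by auto
  qed
qed

lemma inessential: "finite U \<Longrightarrow> U \<inter> Ess k n F = {} \<Longrightarrow> U \<subseteq> {1..n} \<Longrightarrow> x \<in> inputs k n \<Longrightarrow>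
   \<forall>l\<in>U. \<gamma> l < k \<Longrightarrow> F (ov U \<gamma> x) = F x"
proof (induction U rule: finite_induct)
  case empty
  then show ?case by (simp add: ov_def)
next
  case (insert u U)
  have e: "ov (insert u U) \<gamma> x = (ov U \<gamma> x)(u := \<gamma> u)" by (auto simp: ov_def)
  have inp: "ov U \<gamma> x \<in> inputs k n" using ov_inputs insert.prems by auto
  have "u \<notin> Ess k n F" "u \<in> {1..n}" "\<gamma> u < k" using insert.prems by auto
  hence "F ((ov U \<gamma> x)(u := \<gamma> u)) = F (ov U \<gamma> x)" using inp unfolding Ess_def by auto
  hence "F (ov (insert u U) \<gamma> x) = F (ov U \<gamma> x)" by (simp only: e)
  with insert show ?case by simp
qed

theorem lemma4:
  fixes k n m :: nat and f :: "(nat \<Rightarrow> nat) \<Rightarrow> nat" and N :: "nat set"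
    and x c :: "nat \<Rightarrow> nat"
  assumes "k \<ge> 2"
    and "f \<in> Pkn k n"
    and "N \<in> Sep k n f"
    and "\<forall>i\<in>{1..m}. x i \<in> Ess k n f"
    and "\<forall>i\<in>{1..m}. c i < k"
    and "\<forall>i\<in>{1..m}. N \<inter> Ess k n (assign f (x i) (c i)) = {}"
  shows "\<forall>M. M \<noteq> {} \<and> M \<subseteq> x ` {1..m} \<longrightarrow> M \<union> N \<in> Sep k n f"
proof (intro allI impI)
  fix M assume M: "M \<noteq> {} \<and> M \<subseteq> x ` {1..m}"
  from assms(3) obtain g0 where Nne: "N \<noteq> {}" and NE: "N \<subseteq> Ess k n f" and g0: "subfun k n f g0" and Ng: "N = Ess k n g0"
    unfolding Sep_def by blast
  from lemA[OF g0] obtain T0 \<beta>0 where T0: "T0 \<subseteq> {1..n}" "\<forall>l\<in>T0. \<beta>0 l < k" and g0e: "g0 = (\<lambda>a. f (ov T0 \<beta>0 a))" by blast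
  have NT0: "N \<inter> T0 = {}" using lemD[OF T0, of f] Ng g0e by auto
  define T where "T = ({1..n} - N) - M"
  define \<beta> where "\<beta> = (\<lambda>l. if l \<in> T0 then \<beta>0 l else 0)"
  define h where "h = (\<lambda>a. f (ov T \<beta> a))"
  define U where "U = {1..n} - N - T0"
  have k0: "0 < k" using assms(1) by simp
  have Tn: "T \<subseteq> {1..n}" unfolding T_def by auto
  have Tb: "\<forall>l\<in>T. \<beta> l < k" using T0 k0 unfolding \<beta>_def by auto
  have Un: "U \<subseteq> {1..n}" "finite U" unfolding U_def by auto
  have key: "h (ov U (\<lambda>_. 0) (ov T0 \<beta>0 y)) = g0 y" if y: "y \<in> inputs k n" for y
  proof -
    let ?z = "ov U (\<lambda>_. 0) (ov T0 \<beta>0 y)"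
    have yi: "ov T0 \<beta>0 y \<in> inputs k n" using ov_inputs[OF y T0] .
    have "g0 ?z = g0 (ov T0 \<beta>0 y)"
      by (rule inessential[OF Un(2) _ Un(1) yi]) (use Ng k0 in \<open>auto simp: U_def\<close>)
    also have "\<dots> = g0 y" unfolding g0e by (auto simp: ov_def intro!: arg_cong[where f=f])
    finally have 1: "g0 ?z = g0 y" .
    have 2: "ov T0 \<beta>0 ?z = ?z" by (auto simp: ov_def U_def)
    have 3: "ov T \<beta> ?z = ?z" by (rule ext) (auto simp: ov_def U_def T_def \<beta>_def)
    have "h ?z = f ?z" unfolding h_def using 3 by simp
    also have "\<dots> = g0 ?z" unfolding g0e using 2 by simp
    finally show ?thesis using 1 by simp
  qed
  have C1: "N \<subseteq> Ess k n h"
  proof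
    fix j assume j: "j \<in> N"
    then obtain a b where a: "a \<in> inputs k n" "b < k" "g0 a \<noteq> g0 (a(j:=b))" and jn: "j \<in> {1..n}"
      using Ng unfolding Ess_def by blast
    let ?a' = "ov U (\<lambda>_. 0) (ov T0 \<beta>0 a)"
    have jU: "j \<notin> U" "j \<notin> T0" using j NT0 by (auto simp: U_def)
    have e: "ov U (\<lambda>_. 0) (ov T0 \<beta>0 (a(j:=b))) = ?a'(j:=b)" using jU by (auto simp: ov_def)
    have ai: "a(j:=b) \<in> inputs k n" using inputs_upd a jn by blast
    have "h ?a' \<noteq> h (?a'(j:=b))" using key[OF a(1)] key[OF ai] e a(3) by simp
    moreover have "?a' \<in> inputs k n" using ov_inputs[OF ov_inputs[OF a(1) T0] Un(1)] k0 by auto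
    ultimately show "j \<in> Ess k n h" unfolding Ess_def using jn a(2) by blast
  qed
  have C2: "Ess k n h \<subseteq> M \<union> N" using lemD[OF Tn Tb, of f] ess_sub[of k n f] unfolding h_def T_def by auto
  have C3: "M \<subseteq> Ess k n h"
  proof
    fix y assume yM: "y \<in> M"
    then obtain i where i: "i \<in> {1..m}" "y = x i" using M by blast
    show "y \<in> Ess k n h"
    proof (rule ccontr)
      assume nE: "y \<notin> Ess k n h"
      show False
      proof (cases "y \<in> N")
        case True thus False using nE C1 by blast
      next
        case False
        have yT: "y \<notin> T" using yM by (auto simp: T_def)
        have yn: "y \<in> {1..n}" using assms(4) i ess_sub by blast
        have ci: "c i < k" using assms(5) i by blast
        have "\<forall>a\<in>inputs k n. h a = assign h y (c i) a"
          using nE yn ci unfolding Ess_def assign_def by auto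
        hence "Ess k n h = Ess k n (assign h y (c i))" by (rule ess_cong)
        also have "assign h y (c i) = (\<lambda>a. assign f y (c i) (ov T \<beta> a))"
          unfolding h_def assign_def using yT by (auto simp: ov_def intro!: ext arg_cong[where f=f])
        also have "Ess k n \<dots> \<subseteq> Ess k n (assign f y (c i))" using lemD[OF Tn Tb] by blast
        finally have "N \<subseteq> Ess k n (assign f (x i) (c i))" using C1 i by blast
        with assms(6) i Nne show False by blast
      qed
    qed
  qed
  from lemB[OF Tn Tb, of f] obtain g where g: "subfun k n f g" "\<forall>a\<in>inputs k n. g a = h a"
    unfolding h_def by blast
  have "Ess k n g = M \<union> N" using ess_cong[OF g(2)] C1 C2 C3 by blast
  moreover have "M \<subseteq> Ess k n f" using M assms(4) by blast
  ultimately show "M \<union> N \<in> Sep k n f" unfolding Sep_def using g(1) NE Nne by blast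
qed

end
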